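(* Let $s=1$, $d=2$ with basis $|+\rangle,|-\rangle$ and shift vectors $v_+=+1$, $v_-=-1$. Let $H=\frac1{\sqrt2}\begin{pmatrix}1&1\\1&-1\end{pmatrix}$, $\sigma_z=\mathrm{diag}(1,-1)$, and for $\varphi\in[-\pi,\pi)$ let $H_\varphi=e^{i\varphi\sigma_z}H$. Let $\mu$ be a Borel probability measure on $[-\pi,\pi)$ and let $\nu$ be the law of $H_\varphi$ when $\varphi\sim\mu$. Put $r_n=\big|\int e^{in\varphi}\mu(d\varphi)\big|$. If $r_1<1$ and $r_2<1$, then for the associated walk $\mathbf W$, $\mathbf W^2$ is strictly contractive on $\{\mathbb 1\}^\perp\subset\mathcal T$.
   Context: General setting: for a lattice dimension $s$, internal dimension $d$, shift vectors $v_1,\dots,v_d\in\mathbb Z^s$ and a Borel probability measure $\nu$ on $\mathcal U(d)$, put $\widetilde U=\int U\,\nu(dU)$, $T(B)=\int U^*BU\,\nu(dU)$. $\mathcal T$ denotes the Hilbert space of (a.e.-classes of) measurable functions $A:[0,2\pi)^s\to M_d(\mathbb C)$ with inner product $\langle A,B\rangle=(2\pi)^{-s}\int d^sp\,\frac1d\mathrm{tr}(A(p)^*B(p))$, norm $\|A\|=\langle A,A\rangle^{1/2}$ (momentum representation of translation-invariant operators on $\ell^2(\mathbb Z^s)\otimes\mathbb C^d$). $\mathbb 1$ is the constant identity function; $A_0=(2\pi)^{-s}\int A(p)d^sp$; $S(p)=\mathrm{diag}(e^{iv_1\cdot p},\dots,e^{iv_d\cdot p})$. The walk with shift $|x\otimes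 i\rangle\mapsto|x+v_i\otimes i\rangle$ and coins i.i.d. in space and time with law $\nu$ acts on $\mathcal T$ by $\mathbf W(A)(p)=S(p)^*\big[T(A_0)+\widetilde U^*(A(p)-A_0)\widetilde U\big]S(p)$. A bounded map $\mathbf V$ on $\mathcal T$ is strictly contractive on $\{\mathbb 1\}^\perp$ if there is $c<1$ with $\|\mathbf V(A)\|\le c\|A\|$ for all $A\in\mathcal T$ with $\langle\mathbb 1,A\rangle=0$. *)

theory Defs
  imports "HOL-Analysis.Analysis" "HOL-Probability.Probability"
begin

text \<open>Setting s = 1, d = 2. Matrices are complex 2x2 matrices (complex ^ 2 ^ 2);
  index 1 :: 2 is the basis vector |+>, index 2 :: 2 is |->.\<close>

type_synonym cmat = "complex ^ 2 ^ 2"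

definition adj :: "cmat \<Rightarrow> cmat" where
  "adj A = (\<chi> i j. cnj (A $ j $ i))"

definition mtrace :: "cmat \<Rightarrow> complex" where
  "mtrace A = (\<Sum>i\<in>UNIV. A $ i $ i)"

definition idm :: cmat where
  "idm = (\<chi> i j. if i = j then 1 else 0)"

definition Had :: cmat where
  "Had = (\<chi> i j. (if i = 2 \<and> j = 2 then -1 else 1) / complex_of_real (sqrt 2))"

definition sigz :: cmat where
  "sigz = (\<chi> i j. if i = j then (if i = 1 then 1 else -1) else 0)"

definition Hphi :: "real \<Rightarrow> cmat" where
  "Hphi \<phi> = (\<chi> i j. if i = j then cis (\<phi> * Re (sigz $ i $ i)) else 0) ** Had"

definition shiftv :: "2 \<Rightarrow> real" where
  "shiftv i = (if i = 1 then 1 else -1)"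

definition Smat :: "real \<Rightarrow> cmat" where
  "Smat p = (\<chi> i j. if i = j then cis (shiftv i * p) else 0)"

definition Uavg :: "cmat measure \<Rightarrow> cmat" where
  "Uavg \<nu> = (\<chi> i j. \<integral>U. U $ i $ j \<partial>\<nu>)"

definition Tch :: "cmat measure \<Rightarrow> cmat \<Rightarrow> cmat" where
  "Tch \<nu> B = (\<chi> i j. \<integral>U. (adj U ** B ** U) $ i $ j \<partial>\<nu>)"

text \<open>The space \<T>: functions [0,2pi) -> M_2(C), represented by Borel measurable
  functions on the reals whose values on [0,2pi) matter; square integrability.\<close>
definition inT :: "(real \<Rightarrow> cmat) \<Rightarrow> bool" where
  "inT A \<longleftrightarrow> (\<forall>i j. (\<lambda>p. A p $ i $ j) \<in> borel_measurable borel \<and>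
      set_integrable lborel {0..<2*pi} (\<lambda>p. (cmod (A p $ i $ j))\<^sup>2))"

definition Tinner :: "(real \<Rightarrow> cmat) \<Rightarrow> (real \<Rightarrow> cmat) \<Rightarrow> complex" where
  "Tinner A B = (1 / (2*pi)) *
     (LINT p:{0..<2*pi}|lborel. (1/2) * mtrace (adj (A p) ** B p))"

definition Tnorm :: "(real \<Rightarrow> cmat) \<Rightarrow> real" where
  "Tnorm A = sqrt (Re (Tinner A A))"

definition Tone :: "real \<Rightarrow> cmat" where
  "Tone = (\<lambda>p. idm)"

definition zero_mode :: "(real \<Rightarrow> cmat) \<Rightarrow> cmat" where
  "zero_mode A = (\<chi> i j. (1 / (2*pi)) * (LINT p:{0..<2*pi}|lborel. A p $ i $ j))"

definition Wop :: "cmat measure \<Rightarrow> (real \<Rightarrow> cmat) \<Rightarrow> (real \<Rightarrow> cmat)" where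
  "Wop \<nu> A = (\<lambda>p. adj (Smat p) **
      (Tch \<nu> (zero_mode A) + adj (Uavg \<nu>) ** (A p - zero_mode A) ** Uavg \<nu>) ** Smat p)"

definition strictly_contractive_perp :: "((real \<Rightarrow> cmat) \<Rightarrow> (real \<Rightarrow> cmat)) \<Rightarrow> bool" where
  "strictly_contractive_perp V \<longleftrightarrow>
     (\<exists>c<1. \<forall>A. inT A \<longrightarrow> Tinner Tone A = 0 \<longrightarrow> Tnorm (V A) \<le> c * Tnorm A)"

end

theory Submission
  imports Defs
begin


definition Iv :: "real set" where "Iv = {0..<2*pi}"

definition sq :: "(real \<Rightarrow> complex) \<Rightarrow> bool" where
  "sq f \<longleftrightarrow> f \<in> borel_measurable borel \<and> set_integrable lborel {0..<2*pi} (\<lambda>p. (cmod (f p))\<^sup>2)"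

definition avg :: "(real \<Rightarrow> complex) \<Rightarrow> complex" where
  "avg f = complex_of_real (1/(2*pi)) * (LINT p:{0..<2*pi}|lborel. f p)"

definition avr :: "(real \<Rightarrow> real) \<Rightarrow> real" where
  "avr f = (1/(2*pi)) * (LINT p:{0..<2*pi}|lborel. f p)"

lemma Ico_meas: "measure lborel {0..<2*pi} = 2*pi" by simp
thm zero_mode_def Tinner_def Hphi_def

lemma set_integrable_constI:
  "set_integrable lborel {0..<2*pi} (\<lambda>_. c :: 'a::{banach, second_countable_topology})"
  unfolding set_integrable_def
  by (intro integrable_scaleR_left integrable_real_indicator) auto

lemma set_integral_constI:
  "(LINT p:{0..<2*pi}|lborel. (c :: 'a::{banach, second_countable_topology})) = (2*pi) *\<^sub>R c"
  by (subst set_integral_const) auto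

lemma le_1_sq: "(x::real) \<le> 1 + x\<^sup>2"
proof -
  have "0 \<le> (x - 1/2)\<^sup>2" by simp
  then show ?thesis by (simp add: power2_eq_square algebra_simps)
qed

lemma sq_meas: "sq f \<Longrightarrow> set_borel_measurable lborel {0..<2*pi} f"
  unfolding sq_def set_borel_measurable_def by auto

lemma sq_int: assumes "sq f" shows "set_integrable lborel {0..<2*pi} f"
proof (rule set_integrable_bound[where f="\<lambda>p. 1 + (cmod (f p))\<^sup>2"])
  show "set_integrable lborel {0..<2 * pi} (\<lambda>p. 1 + (cmod (f p))\<^sup>2)"
    using assms unfolding sq_def by (intro set_integral_add set_integrable_constI) auto
  show "set_borel_measurable lborel {0..<2 * pi} f" using assms by (rule sq_meas)
  show "AE x in lborel. x \<in> {0..<2 * pi} \<longrightarrow> norm (f x) \<le> norm (1 + (cmod (f x))\<^sup>2)"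
  proof (rule AE_I2, intro impI)
    fix x
    have "cmod (f x) \<le> 1 + (cmod (f x))\<^sup>2" by (rule le_1_sq)
    then show "norm (f x) \<le> norm (1 + (cmod (f x))\<^sup>2)" by simp
  qed
qed

lemma sq_borel: "sq f \<Longrightarrow> f \<in> borel_measurable borel" unfolding sq_def by auto

lemma sq_sqint: "sq f \<Longrightarrow> set_integrable lborel {0..<2*pi} (\<lambda>p. (cmod (f p))\<^sup>2)"
  unfolding sq_def by auto

lemma norm_lin_sq: "(cmod (a*x + b*y))\<^sup>2 \<le> 2*(cmod a)\<^sup>2*(cmod x)\<^sup>2 + 2*(cmod b)\<^sup>2*(cmod y)\<^sup>2"
proof -
  have "cmod (a*x + b*y) \<le> cmod a * cmod x + cmod b * cmod y"
    by (metis norm_mult norm_triangle_ineq)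
  then have "(cmod (a*x + b*y))\<^sup>2 \<le> (cmod a * cmod x + cmod b * cmod y)\<^sup>2"
    by (simp add: power_mono)
  also have "\<dots> \<le> 2*(cmod a)\<^sup>2*(cmod x)\<^sup>2 + 2*(cmod b)\<^sup>2*(cmod y)\<^sup>2"
  proof -
    have "0 \<le> (cmod a * cmod x - cmod b * cmod y)\<^sup>2" by simp
    then show ?thesis by (simp add: power2_eq_square algebra_simps)
  qed
  finally show ?thesis .
qed

lemma sq_lin:
  assumes "sq f" "sq g"
  shows "sq (\<lambda>p. a * f p + b * g p)"
  unfolding sq_def
proof
  show "(\<lambda>p. a * f p + b * g p) \<in> borel_measurable borel"
    using sq_borel[OF assms(1)] sq_borel[OF assms(2)] by measurable
  show "set_integrable lborel {0..<2 * pi} (\<lambda>p. (cmod (a * f p + b * g p))\<^sup>2)"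
  proof (rule set_integrable_bound[where f="\<lambda>p. 2*(cmod a)\<^sup>2*(cmod (f p))\<^sup>2 + 2*(cmod b)\<^sup>2*(cmod (g p))\<^sup>2"])
    show "set_integrable lborel {0..<2 * pi} (\<lambda>p. 2*(cmod a)\<^sup>2*(cmod (f p))\<^sup>2 + 2*(cmod b)\<^sup>2*(cmod (g p))\<^sup>2)"
      using sq_sqint[OF assms(1)] sq_sqint[OF assms(2)]
      by (intro set_integral_add set_integrable_mult_right) auto
    show "set_borel_measurable lborel {0..<2 * pi} (\<lambda>p. (cmod (a * f p + b * g p))\<^sup>2)"
      unfolding set_borel_measurable_def using sq_borel[OF assms(1)] sq_borel[OF assms(2)] by measurable
    show "AE x in lborel. x \<in> {0..<2 * pi} \<longrightarrow>
        norm ((cmod (a * f x + b * g x))\<^sup>2) \<le> norm (2*(cmod a)\<^sup>2*(cmod (f x))\<^sup>2 + 2*(cmod b)\<^sup>2*(cmod (g x))\<^sup>2)"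
      using norm_lin_sq[of a "f _" b "g _"] by (intro AE_I2) auto
  qed
qed

lemma sq_const: "sq (\<lambda>_. c)"
  unfolding sq_def by (auto intro: set_integrable_constI)

lemma sq_unimod:
  assumes "sq f" "u \<in> borel_measurable borel" "\<And>p. cmod (u p) = 1"
  shows "sq (\<lambda>p. u p * f p)"
  using assms unfolding sq_def by (auto simp: norm_mult)

lemma sq_add: "sq f \<Longrightarrow> sq g \<Longrightarrow> sq (\<lambda>p. f p + g p)"
  using sq_lin[of f g 1 1] by simp
lemma sq_diff: "sq f \<Longrightarrow> sq g \<Longrightarrow> sq (\<lambda>p. f p - g p)"
  using sq_lin[of f g 1 "-1"] by simp
lemma sq_cmult: "sq f \<Longrightarrow> sq (\<lambda>p. a * f p)"
  using sq_lin[of f f a 0] by simp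

lemma set_integral_Re:
  assumes "set_integrable lborel {0..<2*pi} (f :: real \<Rightarrow> complex)"
  shows "(LINT p:{0..<2*pi}|lborel. Re (f p)) = Re (LINT p:{0..<2*pi}|lborel. f p)"
proof -
  have "(LINT p:{0..<2*pi}|lborel. Re (f p)) = (\<integral>p. Re (indicator {0..<2*pi} p *\<^sub>R f p) \<partial>lborel)"
    unfolding set_lebesgue_integral_def by (intro Bochner_Integration.integral_cong) auto
  also have "\<dots> = Re (\<integral>p. indicator {0..<2*pi} p *\<^sub>R f p \<partial>lborel)"
    by (rule integral_Re) (use assms in \<open>simp add: set_integrable_def\<close>)
  finally show ?thesis unfolding set_lebesgue_integral_def .
qed

lemma set_integrable_Re:
  assumes "set_integrable lborel {0..<2*pi} (f :: real \<Rightarrow> complex)"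
  shows "set_integrable lborel {0..<2*pi} (\<lambda>p. Re (f p))"
proof -
  have "integrable lborel (\<lambda>p. Re (indicator {0..<2*pi} p *\<^sub>R f p))"
    by (rule integrable_Re) (use assms in \<open>simp add: set_integrable_def\<close>)
  then show ?thesis unfolding set_integrable_def by simp
qed

lemma cmod_add_sq: "(cmod (c + g))\<^sup>2 = (cmod c)\<^sup>2 + (cmod g)\<^sup>2 + 2 * Re (cnj c * g)"
  unfolding cmod_power2 by (simp add: power2_eq_square algebra_simps)

lemma avr_add_zero_mean:
  assumes "sq g" "avg g = 0"
  shows "avr (\<lambda>p. (cmod (c + g p))\<^sup>2) = (cmod c)\<^sup>2 + avr (\<lambda>p. (cmod (g p))\<^sup>2)"
proof -
  have gi: "set_integrable lborel {0..<2*pi} g" by (rule sq_int[OF assms(1)])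
  have ig0: "(LINT p:{0..<2*pi}|lborel. g p) = 0"
    using assms(2) unfolding avg_def by simp
  have i1: "set_integrable lborel {0..<2*pi} (\<lambda>p. Re (cnj c * g p))"
    by (rule set_integrable_Re) (use gi in auto)
  have i2: "set_integrable lborel {0..<2*pi} (\<lambda>p. 2 * Re (cnj c * g p))"
    using i1 by (rule set_integrable_mult_right)
  have i3: "set_integrable lborel {0..<2*pi} (\<lambda>p. (cmod (g p))\<^sup>2)" by (rule sq_sqint[OF assms(1)])
  have "(LINT p:{0..<2*pi}|lborel. Re (cnj c * g p)) = Re (cnj c * (LINT p:{0..<2*pi}|lborel. g p))"
    by (subst set_integral_Re) (use gi in auto)
  also have "\<dots> = 0" using ig0 by simp
  finally have z: "(LINT p:{0..<2*pi}|lborel. Re (cnj c * g p)) = 0" .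
  have "(LINT p:{0..<2*pi}|lborel. (cmod (c + g p))\<^sup>2)
      = (LINT p:{0..<2*pi}|lborel. (cmod c)\<^sup>2 + ((cmod (g p))\<^sup>2 + 2 * Re (cnj c * g p)))"
    by (simp add: cmod_add_sq add.assoc)
  also have "\<dots> = (LINT p:{0..<2*pi}|lborel. (cmod c)\<^sup>2) + (LINT p:{0..<2*pi}|lborel. ((cmod (g p))\<^sup>2 + 2 * Re (cnj c * g p)))"
    by (rule set_integral_add(2)) (intro set_integrable_constI set_integral_add(1) i2 i3)+
  also have "(LINT p:{0..<2*pi}|lborel. ((cmod (g p))\<^sup>2 + 2 * Re (cnj c * g p))) = (LINT p:{0..<2*pi}|lborel. (cmod (g p))\<^sup>2) + (LINT p:{0..<2*pi}|lborel. 2 * Re (cnj c * g p))"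
    by (rule set_integral_add(2)) (rule i3, rule i2)
  also have "(LINT p:{0..<2*pi}|lborel. 2 * Re (cnj c * g p)) = 0" by (simp only: set_integral_mult_right z mult_zero_right)
  finally show ?thesis unfolding avr_def set_integral_constI by (simp add: field_simps)
qed

lemma avr_nonneg: "sq g \<Longrightarrow> 0 \<le> avr (\<lambda>p. (cmod (g p))\<^sup>2)"
  unfolding avr_def set_lebesgue_integral_def
  by (intro mult_nonneg_nonneg integral_nonneg_AE) auto

lemma avg_lin:
  assumes "sq f" "sq g"
  shows "avg (\<lambda>p. a * f p + b * g p) = a * avg f + b * avg g"
  using sq_int[OF assms(1)] sq_int[OF assms(2)] unfolding avg_def
  by (subst set_integral_add) (auto simp: algebra_simps)

lemma avg_const: "avg (\<lambda>_. c) = c"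
  unfolding avg_def set_integral_constI by (simp add: scaleR_conv_of_real)

lemma jensen:
  assumes "sq g"
  shows "(cmod (avg g))\<^sup>2 \<le> avr (\<lambda>p. (cmod (g p))\<^sup>2)"
proof -
  define c where "c = avg g"
  define h where "h = (\<lambda>p. g p - c)"
  have sh: "sq h" unfolding h_def by (intro sq_diff assms sq_const)
  have "avg h = avg (\<lambda>p. 1 * g p + (-1) * (\<lambda>_. c) p)" unfolding h_def by simp
  also have "\<dots> = 0" by (subst avg_lin) (auto simp: assms sq_const avg_const c_def)
  finally have "avr (\<lambda>p. (cmod (c + h p))\<^sup>2) = (cmod c)\<^sup>2 + avr (\<lambda>p. (cmod (h p))\<^sup>2)"
    using avr_add_zero_mean[OF sh] by simp
  moreover have "(\<lambda>p. (cmod (c + h p))\<^sup>2) = (\<lambda>p. (cmod (g p))\<^sup>2)" unfolding h_def by auto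
  ultimately have "avr (\<lambda>p. (cmod (g p))\<^sup>2) = (cmod c)\<^sup>2 + avr (\<lambda>p. (cmod (h p))\<^sup>2)" by simp
  then show ?thesis using avr_nonneg[OF sh] unfolding c_def by simp
qed




section \<open>Matrix lemmas\<close>

lemma one_neq_two[simp]: "(1::2) \<noteq> 2"
proof
  assume "(1::2) = 2"
  then have "(UNIV::2 set) = {1}" using UNIV_2 by auto
  then have "card (UNIV::2 set) = card {1::2}" by (rule arg_cong)
  then show False by simp
qed
lemma two_neq_one[simp]: "(2::2) \<noteq> 1" using one_neq_two by metis

definition hs :: "cmat \<Rightarrow> real" where
  "hs M = ((cmod (M$1$1))\<^sup>2 + (cmod (M$1$2))\<^sup>2 + (cmod (M$2$1))\<^sup>2 + (cmod (M$2$2))\<^sup>2) / 2"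

lemma mm3: fixes P X Q :: cmat shows "(P ** X ** Q) $ i $ j =
   P$i$1 * X$1$1 * Q$1$j + P$i$1 * X$1$2 * Q$2$j + P$i$2 * X$2$1 * Q$1$j + P$i$2 * X$2$2 * Q$2$j"
  by (simp add: matrix_matrix_mult_def sum_2 algebra_simps)

lemma Had_ent: "Had$1$1 = 1 / complex_of_real (sqrt 2)" "Had$1$2 = 1 / complex_of_real (sqrt 2)"
  "Had$2$1 = 1 / complex_of_real (sqrt 2)" "Had$2$2 = - 1 / complex_of_real (sqrt 2)"
  by (simp_all add: Had_def)

lemma sqrt2c: "complex_of_real (sqrt 2) * complex_of_real (sqrt 2) = 2"
  by (subst of_real_mult[symmetric]) simp

lemma HYH11: "(Had ** Y ** Had) $1$1 = (Y$1$1 + Y$1$2 + Y$2$1 + Y$2$2) / 2"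
  unfolding mm3 Had_ent by (simp add: field_simps sqrt2c)
lemma HYH12: "(Had ** Y ** Had) $1$2 = (Y$1$1 - Y$1$2 + Y$2$1 - Y$2$2) / 2"
  unfolding mm3 Had_ent by (simp add: field_simps sqrt2c)
lemma HYH21: "(Had ** Y ** Had) $2$1 = (Y$1$1 + Y$1$2 - Y$2$1 - Y$2$2) / 2"
  unfolding mm3 Had_ent by (simp add: field_simps sqrt2c)
lemma HYH22: "(Had ** Y ** Had) $2$2 = (Y$1$1 - Y$1$2 - Y$2$1 + Y$2$2) / 2"
  unfolding mm3 Had_ent by (simp add: field_simps sqrt2c)
lemmas HYH = HYH11 HYH12 HYH21 HYH22

lemma four_id: "(cmod ((a+b+c+d)/2))\<^sup>2 + (cmod ((a-b+c-d)/2))\<^sup>2 + (cmod ((a+b-c-d)/2))\<^sup>2 + (cmod ((a-b-c+d)/2))\<^sup>2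
   = (cmod a)\<^sup>2 + (cmod b)\<^sup>2 + (cmod c)\<^sup>2 + (cmod d)\<^sup>2"
  unfolding cmod_power2 by (simp add: power2_eq_square field_simps)

lemma hs_Had: "hs (Had ** Y ** Had) = hs Y"
  unfolding hs_def HYH using four_id by simp

definition dsel :: "complex \<Rightarrow> complex \<Rightarrow> 2 \<Rightarrow> complex" where
  "dsel a b i = (if i = 1 then a else b)"

definition dg :: "complex \<Rightarrow> complex \<Rightarrow> cmat" where
  "dg a b = (\<chi> i j. if i = j then dsel a b i else 0)"

lemma dsel_simps[simp]: "dsel a b 1 = a" "dsel a b 2 = b" by (simp_all add: dsel_def)

lemma dg_ent[simp]: "dg a b $1$1 = a" "dg a b $1$2 = 0" "dg a b $2$1 = 0" "dg a b $2$2 = b"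
  by (simp_all add: dg_def)

lemma adj_ent: "adj M $ i $ j = cnj (M $ j $ i)" by (simp add: adj_def)

lemma dg_conj: "(adj (dg a b) ** M ** dg a b) $ i $ j = cnj (dsel a b i) * M$i$j * dsel a b j"
  using exhaust_2[of i] exhaust_2[of j] by (auto simp: mm3 adj_ent)

lemma hs_dg: assumes "cmod a = r" "cmod b = r"
  shows "hs (adj (dg a b) ** M ** dg a b) = r^4 * hs M"
  unfolding hs_def dg_conj using assms by (simp add: norm_mult power_mult_distrib field_simps)

lemma adj_mult: "adj ((P::cmat) ** Q) = adj Q ** adj P"
  by (simp add: adj_def matrix_matrix_mult_def vec_eq_iff mult.commute)

lemma adj_Had: "adj Had = Had"
  unfolding adj_def Had_def vec_eq_iff using exhaust_2 by auto

lemma adj_adj: "adj (adj M) = M" by (simp add: adj_def vec_eq_iff)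

lemma Hphi_dg: "Hphi \<phi> = dg (cis \<phi>) (cis (-\<phi>)) ** Had"
proof -
  have "(\<chi> i j. if i = j then cis (\<phi> * Re (sigz $ i $ i)) else 0) = dg (cis \<phi>) (cis (-\<phi>))"
    unfolding vec_eq_iff dg_def sigz_def dsel_def using exhaust_2 by auto
  then show ?thesis unfolding Hphi_def by simp
qed

lemma Smat_dg: "Smat p = dg (cis p) (cis (-p))"
  unfolding vec_eq_iff dg_def Smat_def dsel_def shiftv_def using exhaust_2 by auto

lemma dg_mult_ent: "(dg a b ** M) $ i $ j = dsel a b i * M $ i $ j"
  using exhaust_2[of i] by (auto simp: matrix_matrix_mult_def sum_2)

definition ds :: "real \<Rightarrow> 2 \<Rightarrow> complex" where
  "ds \<phi> k = dsel (cis \<phi>) (cis (-\<phi>)) k"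

lemma ds_cont: "continuous_on UNIV (\<lambda>\<phi>. ds \<phi> k)"
  unfolding ds_def dsel_def by (cases "k = 1") (auto intro!: continuous_intros)

lemma ds_meas[measurable]: "(\<lambda>\<phi>. ds \<phi> k) \<in> borel_measurable borel"
  by (rule borel_measurable_continuous_onI[OF ds_cont])

lemma ds_norm[simp]: "cmod (ds \<phi> k) = 1"
  unfolding ds_def dsel_def by auto

lemma Hphi_ent: "Hphi \<phi> = (\<chi> i j. ds \<phi> i * Had $ i $ j)"
  unfolding Hphi_dg vec_eq_iff dg_mult_ent ds_def by simp

lemma Hphi_cont: "continuous_on UNIV Hphi"
  unfolding Hphi_ent by (intro continuous_intros ds_cont)

lemma Hphi_meas: "Hphi \<in> borel_measurable borel"
  by (rule borel_measurable_continuous_onI[OF Hphi_cont])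

lemma ent_meas: "(\<lambda>U::cmat. U $ i $ j) \<in> borel_measurable borel"
  by (intro borel_measurable_continuous_onI continuous_intros continuous_on_id)

lemma conj_ent_meas: "(\<lambda>U::cmat. (adj U ** B ** U) $ i $ j) \<in> borel_measurable borel"
  unfolding mm3 adj_ent
  by (intro borel_measurable_continuous_onI continuous_intros continuous_on_id)

lemma mu_int:
  assumes "prob_space \<mu>" "sets \<mu> = sets borel" "g \<in> borel_measurable borel" "\<And>x. norm (g x) \<le> C"
  shows "integrable \<mu> (g :: real \<Rightarrow> complex)"
proof -
  interpret prob_space \<mu> by fact
  have e: "measurable \<mu> borel = measurable borel (borel :: complex measure)" by (rule measurable_cong_sets[OF assms(2) refl])
  have "g \<in> borel_measurable \<mu>" using assms(3) e by simp
  then show ?thesis using assms(4) by (intro integrable_const_bound[where B=C]) auto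
qed

lemma ds_int:
  assumes "prob_space \<mu>" "sets \<mu> = sets borel"
  shows "integrable \<mu> (\<lambda>\<phi>. c * ds \<phi> k)"
  by (rule mu_int[OF assms, where C="cmod c"]) (auto simp: norm_mult)

lemma ds2_int:
  assumes "prob_space \<mu>" "sets \<mu> = sets borel"
  shows "integrable \<mu> (\<lambda>\<phi>. cnj (ds \<phi> k) * c * ds \<phi> l)"
  by (rule mu_int[OF assms, where C="cmod c"])
    (auto simp: norm_mult intro!: borel_measurable_continuous_onI continuous_intros ds_cont)

lemma Uavg_eq:
  assumes "prob_space \<mu>" "sets \<mu> = sets borel"
  shows "Uavg (distr \<mu> borel Hphi) = dg (\<integral>\<phi>. cis \<phi> \<partial>\<mu>) (\<integral>\<phi>. cis (-\<phi>) \<partial>\<mu>) ** Had"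
proof -
  have e: "measurable \<mu> borel = measurable borel (borel :: cmat measure)" by (rule measurable_cong_sets[OF assms(2) refl])
  have hm: "Hphi \<in> measurable \<mu> borel" using Hphi_meas e by simp
  have "Uavg (distr \<mu> borel Hphi) $ i $ j = (dg (\<integral>\<phi>. cis \<phi> \<partial>\<mu>) (\<integral>\<phi>. cis (-\<phi>) \<partial>\<mu>) ** Had) $ i $ j" for i j
  proof -
    have "Uavg (distr \<mu> borel Hphi) $ i $ j = (\<integral>\<phi>. Hphi \<phi> $ i $ j \<partial>\<mu>)"
      unfolding Uavg_def by (simp add: integral_distr[OF hm ent_meas])
    also have "\<dots> = (\<integral>\<phi>. ds \<phi> i \<partial>\<mu>) * Had $ i $ j"
      unfolding Hphi_ent by simp
    also have "(\<integral>\<phi>. ds \<phi> i \<partial>\<mu>) = dsel (\<integral>\<phi>. cis \<phi> \<partial>\<mu>) (\<integral>\<phi>. cis (-\<phi>) \<partial>\<mu>) i"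
      unfolding ds_def dsel_def by simp
    finally show ?thesis unfolding dg_mult_ent .
  qed
  then show ?thesis unfolding vec_eq_iff by auto
qed

definition wt :: "real measure \<Rightarrow> 2 \<Rightarrow> 2 \<Rightarrow> complex" where
  "wt \<mu> k l = (\<integral>\<phi>. cnj (ds \<phi> k) * ds \<phi> l \<partial>\<mu>)"

lemma term_int:
  assumes "prob_space \<mu>" "sets \<mu> = sets borel"
  shows "integrable \<mu> (\<lambda>\<phi>. a * (cnj (ds \<phi> k) * b * ds \<phi> l) * c)"
  by (rule mu_int[OF assms, where C="cmod a * cmod b * cmod c"])
    (auto simp: norm_mult intro!: borel_measurable_continuous_onI continuous_intros ds_cont)

lemma term_integral:
  "(\<integral>\<phi>. a * (cnj (ds \<phi> k) * b * ds \<phi> l) * c \<partial>\<mu>) = a * (b * wt \<mu> k l) * c"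
proof -
  have "(\<lambda>\<phi>. a * (cnj (ds \<phi> k) * b * ds \<phi> l) * c) = (\<lambda>\<phi>. (a * b * c) * (cnj (ds \<phi> k) * ds \<phi> l))"
    by (auto simp: algebra_simps)
  then show ?thesis unfolding wt_def by (simp add: algebra_simps)
qed

lemma term_integral2:
  "(\<integral>\<phi>. cnj (ds \<phi> k) * b * ds \<phi> l \<partial>\<mu>) = b * wt \<mu> k l"
proof -
  have "(\<lambda>\<phi>. cnj (ds \<phi> k) * b * ds \<phi> l) = (\<lambda>\<phi>. b * (cnj (ds \<phi> k) * ds \<phi> l))"
    by (auto simp: algebra_simps)
  then show ?thesis unfolding wt_def by (simp add: algebra_simps)
qed

lemma Hphi_conj: "adj (Hphi \<phi>) ** B ** Hphi \<phi> = Had ** (adj (dg (cis \<phi>) (cis (-\<phi>))) ** B ** dg (cis \<phi>) (cis (-\<phi>))) ** Had"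
  unfolding Hphi_dg adj_mult adj_Had by (simp add: matrix_mul_assoc)

lemma Tch_eq:
  assumes "prob_space \<mu>" "sets \<mu> = sets borel"
  shows "Tch (distr \<mu> borel Hphi) B = Had ** (\<chi> k l. B$k$l * wt \<mu> k l) ** Had"
proof -
  have e: "measurable \<mu> borel = measurable borel (borel :: cmat measure)" by (rule measurable_cong_sets[OF assms(2) refl])
  have hm: "Hphi \<in> measurable \<mu> borel" using Hphi_meas e by simp
  have "Tch (distr \<mu> borel Hphi) B $ i $ j = (Had ** (\<chi> k l. B$k$l * wt \<mu> k l) ** Had) $ i $ j" for i j
  proof -
    have "Tch (distr \<mu> borel Hphi) B $ i $ j = (\<integral>\<phi>. (adj (Hphi \<phi>) ** B ** Hphi \<phi>) $ i $ j \<partial>\<mu>)"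
      unfolding Tch_def by (simp add: integral_distr[OF hm conj_ent_meas])
    also have "\<dots> = (\<integral>\<phi>. Had$i$1 * (cnj (ds \<phi> 1) * B$1$1 * ds \<phi> 1) * Had$1$j
        + Had$i$1 * (cnj (ds \<phi> 1) * B$1$2 * ds \<phi> 2) * Had$2$j
        + Had$i$2 * (cnj (ds \<phi> 2) * B$2$1 * ds \<phi> 1) * Had$1$j
        + Had$i$2 * (cnj (ds \<phi> 2) * B$2$2 * ds \<phi> 2) * Had$2$j \<partial>\<mu>)"
      unfolding Hphi_conj mm3[of Had _ Had] dg_conj ds_def by simp
    also have "\<dots> = Had$i$1 * (B$1$1 * wt \<mu> 1 1) * Had$1$j + Had$i$1 * (B$1$2 * wt \<mu> 1 2) * Had$2$j
        + Had$i$2 * (B$2$1 * wt \<mu> 2 1) * Had$1$j + Had$i$2 * (B$2$2 * wt \<mu> 2 2) * Had$2$j"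
      by (simp add: integral_add term_int[OF assms] term_integral term_integral2 del: vector_add_component)
    finally show ?thesis unfolding mm3[of Had _ Had] by simp
  qed
  then show ?thesis unfolding vec_eq_iff by auto
qed

definition nrm2 :: "(real \<Rightarrow> cmat) \<Rightarrow> real" where
  "nrm2 A = avr (\<lambda>p. hs (A p))"

definition allsq :: "(real \<Rightarrow> cmat) \<Rightarrow> bool" where
  "allsq A \<longleftrightarrow> (\<forall>i j. sq (\<lambda>p. A p $ i $ j))"

lemma inT_allsq: "inT A = allsq A"
  unfolding inT_def allsq_def sq_def by auto

lemma cnj_mult_self: "cnj z * z = complex_of_real ((cmod z)\<^sup>2)"
  by (subst mult.commute) (simp only: complex_norm_square[symmetric])

lemma hs_eq_trace: "(1/2) * mtrace (adj M ** M) = complex_of_real (hs M)"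
proof -
  have "mtrace (adj M ** M) = (\<Sum>i\<in>UNIV. \<Sum>k\<in>UNIV. cnj (M$k$i) * M$k$i)"
    unfolding mtrace_def by (simp add: matrix_matrix_mult_def adj_ent)
  also have "\<dots> = complex_of_real ((cmod (M$1$1))\<^sup>2 + (cmod (M$1$2))\<^sup>2 + (cmod (M$2$1))\<^sup>2 + (cmod (M$2$2))\<^sup>2)"
    by (simp add: sum_2 cnj_mult_self)
  finally show ?thesis unfolding hs_def by simp
qed

lemma Tnorm_nrm2: "Tnorm A = sqrt (nrm2 A)"
proof -
  have "Tinner A A = complex_of_real (1 / (2*pi)) * (LINT p:{0..<2*pi}|lborel. complex_of_real (hs (A p)))"
    unfolding Tinner_def hs_eq_trace by simp
  also have "\<dots> = complex_of_real (nrm2 A)"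
    unfolding set_integral_complex_of_real nrm2_def avr_def by simp
  finally show ?thesis unfolding Tnorm_def by simp
qed

lemma avr_add:
  assumes "set_integrable lborel {0..<2*pi} f" "set_integrable lborel {0..<2*pi} g"
  shows "avr (\<lambda>p. f p + g p) = avr f + avr g"
  unfolding avr_def using assms by (simp add: algebra_simps)

lemma avr_cmult: "avr (\<lambda>p. c * f p) = c * avr f"
  unfolding avr_def by simp

lemma nrm2_split:
  assumes "allsq A"
  shows "nrm2 A = (avr (\<lambda>p. (cmod (A p $1$1))\<^sup>2) + avr (\<lambda>p. (cmod (A p $1$2))\<^sup>2)
     + avr (\<lambda>p. (cmod (A p $2$1))\<^sup>2) + avr (\<lambda>p. (cmod (A p $2$2))\<^sup>2)) / 2"
proof -
  have i: "set_integrable lborel {0..<2*pi} (\<lambda>p. (cmod (A p $i$j))\<^sup>2)" for i j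
    using assms unfolding allsq_def by (auto intro: sq_sqint)
  have "nrm2 A = (1/2) * avr (\<lambda>p. (cmod (A p $1$1))\<^sup>2 + (cmod (A p $1$2))\<^sup>2 + (cmod (A p $2$1))\<^sup>2 + (cmod (A p $2$2))\<^sup>2)"
    unfolding nrm2_def hs_def by (subst avr_cmult[symmetric]) simp
  also have "avr (\<lambda>p. (cmod (A p $1$1))\<^sup>2 + (cmod (A p $1$2))\<^sup>2 + (cmod (A p $2$1))\<^sup>2 + (cmod (A p $2$2))\<^sup>2)
     = avr (\<lambda>p. (cmod (A p $1$1))\<^sup>2 + (cmod (A p $1$2))\<^sup>2 + (cmod (A p $2$1))\<^sup>2) + avr (\<lambda>p. (cmod (A p $2$2))\<^sup>2)"
    by (rule avr_add) (intro set_integral_add(1) i)+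
  also have "avr (\<lambda>p. (cmod (A p $1$1))\<^sup>2 + (cmod (A p $1$2))\<^sup>2 + (cmod (A p $2$1))\<^sup>2)
     = avr (\<lambda>p. (cmod (A p $1$1))\<^sup>2 + (cmod (A p $1$2))\<^sup>2) + avr (\<lambda>p. (cmod (A p $2$1))\<^sup>2)"
    by (rule avr_add) (intro set_integral_add(1) i)+
  also have "avr (\<lambda>p. (cmod (A p $1$1))\<^sup>2 + (cmod (A p $1$2))\<^sup>2)
     = avr (\<lambda>p. (cmod (A p $1$1))\<^sup>2) + avr (\<lambda>p. (cmod (A p $1$2))\<^sup>2)"
    by (rule avr_add) (intro set_integral_add(1) i)+
  finally show ?thesis by simp
qed

lemma avg_add: "sq f \<Longrightarrow> sq g \<Longrightarrow> avg (\<lambda>p. f p + g p) = avg f + avg g"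
  using avg_lin[of f g 1 1] by simp

lemma avg_cmult: "avg (\<lambda>p. c * f p) = c * avg f"
  unfolding avg_def by simp

lemma lin4_sq: "sq f1 \<Longrightarrow> sq f2 \<Longrightarrow> sq f3 \<Longrightarrow> sq f4 \<Longrightarrow>
   sq (\<lambda>p. c1 * f1 p + c2 * f2 p + c3 * f3 p + c4 * f4 p)"
  by (intro sq_add sq_cmult)

lemma lin4_avg: "sq f1 \<Longrightarrow> sq f2 \<Longrightarrow> sq f3 \<Longrightarrow> sq f4 \<Longrightarrow>
   avg (\<lambda>p. c1 * f1 p + c2 * f2 p + c3 * f3 p + c4 * f4 p) = c1 * avg f1 + c2 * avg f2 + c3 * avg f3 + c4 * avg f4"
  by (simp add: avg_add sq_add sq_cmult avg_cmult)

lemma mm3': fixes P X Q :: cmat shows "(P ** X ** Q) $ i $ j =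
   (P$i$1 * Q$1$j) * X$1$1 + (P$i$1 * Q$2$j) * X$1$2 + (P$i$2 * Q$1$j) * X$2$1 + (P$i$2 * Q$2$j) * X$2$2"
  unfolding mm3 by (simp add: algebra_simps)

lemma sq_mm: fixes P Q :: cmat shows "allsq X \<Longrightarrow> sq (\<lambda>p. (P ** X p ** Q) $ i $ j)"
  unfolding mm3' allsq_def by (intro lin4_sq) auto

lemma avg_mm: fixes P Q :: cmat shows "allsq X \<Longrightarrow> avg (\<lambda>p. (P ** X p ** Q) $ i $ j) = (P ** (\<chi> k l. avg (\<lambda>p. X p $ k $ l)) ** Q) $ i $ j"
  unfolding mm3' allsq_def by (subst lin4_avg) auto

lemma cis_int_zero:
  fixes k :: real
  assumes "k \<noteq> 0" "k \<in> \<int>"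
  shows "(LINT p:{0..<2*pi}|lborel. cis (k * p)) = 0"
proof -
  have "(LINT p:{0..<2*pi}|lborel. cis (k * p)) = (LINT p:{0..2*pi}|lborel. cis (k * p))"
    by (rule set_integral_discrete_difference[where X="{2*pi}"]) auto
  also have "\<dots> = cis (k * (2*pi)) / (\<i>*k) - cis (k*0) / (\<i>*k)"
    unfolding set_lebesgue_integral_def
  proof (rule integral_FTC_atLeastAtMost)
    show "continuous_on {0..(2 * pi)} (\<lambda>x. cis (k * x))"
      by (intro continuous_intros)
    fix x :: real
    show "((\<lambda>x. cis (k * x) / (\<i> * k)) has_vector_derivative cis (k * x)) (at x within {0..(2 * pi)})"
      unfolding has_vector_derivative_def
      using assms(1)
      by (auto intro!: derivative_eq_intros ext simp: field_simps scaleR_conv_of_real)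
  qed simp
  also have "cis (k * (2*pi)) = 1" using cis_multiple_2pi[OF assms(2)] by (simp add: mult_ac)
  finally show ?thesis by simp
qed

lemma sq_cis: "sq (\<lambda>p. cis (k * p))"
proof -
  have "(\<lambda>p. cis (k * p)) \<in> borel_measurable borel"
    by (intro borel_measurable_continuous_onI continuous_intros)
  then show ?thesis using sq_unimod[OF sq_const[of 1], of "\<lambda>p. cis (k * p)"] by simp
qed

lemma avg_cis2: "avg (\<lambda>p. cis (2 * p)) = 0" "avg (\<lambda>p. cis (-2 * p)) = 0"
  unfolding avg_def using cis_int_zero[of 2] cis_int_zero[of "-2"] by simp_all

definition es :: "2 \<Rightarrow> 2 \<Rightarrow> real \<Rightarrow> complex" where
  "es i j p = cnj (dsel (cis p) (cis (-p)) i) * dsel (cis p) (cis (-p)) j"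

lemma es_norm: "cmod (es i j p) = 1"
  unfolding es_def dsel_def by (auto simp: norm_mult)

lemma es_meas: "(es i j) \<in> borel_measurable borel"
proof -
  have "continuous_on UNIV (es i j)"
    unfolding es_def dsel_def by (cases "i = 1"; cases "j = 1") (auto intro!: continuous_intros)
  then show ?thesis by (rule borel_measurable_continuous_onI)
qed

lemma es_vals: "es 1 1 p = 1" "es 2 2 p = 1" "es 1 2 p = cis (-2 * p)" "es 2 1 p = cis (2 * p)"
  unfolding es_def by (simp_all add: cis_cnj cis_mult)

lemma es_diag: "es i i p = 1"
  by (cases "i = 1") (simp_all add: es_def cnj_mult_self dsel_def)

lemma Smat_conj: "(adj (Smat p) ** M ** Smat p) $ i $ j = es i j p * M $ i $ j"
  unfolding Smat_dg dg_conj es_def by (simp add: algebra_simps)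

lemma zm_ent: "zero_mode A $ i $ j = avg (\<lambda>p. A p $ i $ j)"
  unfolding zero_mode_def avg_def by simp

lemma walk_step:
  fixes \<nu> :: "cmat measure" and A :: "real \<Rightarrow> cmat"
  assumes U: "Uavg \<nu> = dg a b ** Had" "cmod a = r" "cmod b = r" and A: "allsq A"
  shows "allsq (Wop \<nu> A)"
   and "nrm2 (Wop \<nu> A) = hs (Tch \<nu> (zero_mode A)) + r^4 * (nrm2 A - hs (zero_mode A))"
   and "hs (zero_mode (Wop \<nu> A)) \<le> ((cmod (Tch \<nu> (zero_mode A) $1$1))\<^sup>2 + (cmod (Tch \<nu> (zero_mode A) $2$2))\<^sup>2)/2
          + r^4 * (nrm2 A - hs (zero_mode A))"
   and "0 \<le> nrm2 A - hs (zero_mode A)"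
proof -
  define A0 where "A0 = zero_mode A"
  define B where "B = Tch \<nu> A0"
  define X where "X = (\<lambda>p. A p - A0)"
  define Z where "Z = (\<lambda>p. adj (Uavg \<nu>) ** X p ** Uavg \<nu>)"
  have sqA: "sq (\<lambda>p. A p $ k $ l)" for k l using A unfolding allsq_def by auto
  have Xe: "X p $ k $ l = A p $ k $ l - A0 $ k $ l" for p k l unfolding X_def by simp
  have sqX: "sq (\<lambda>p. X p $ k $ l)" for k l unfolding Xe by (intro sq_diff sqA sq_const)
  have allX: "allsq X" unfolding allsq_def using sqX by auto
  have avgX: "avg (\<lambda>p. X p $ k $ l) = 0" for k l
  proof -
    have "avg (\<lambda>p. X p $ k $ l) = avg (\<lambda>p. 1 * A p $ k $ l + (-1) * (\<lambda>_. A0 $ k $ l) p)"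
      unfolding Xe by simp
    also have "\<dots> = 0" by (subst avg_lin) (auto simp: sqA sq_const avg_const A0_def zm_ent)
    finally show ?thesis .
  qed
  have sqZ: "sq (\<lambda>p. Z p $ i $ j)" for i j unfolding Z_def by (rule sq_mm[OF allX])
  have allZ: "allsq Z" unfolding allsq_def using sqZ by auto
  have avgZ: "avg (\<lambda>p. Z p $ i $ j) = 0" for i j
    unfolding Z_def avg_mm[OF allX] avgX by (simp add: mm3)
  have hsZ: "hs (Z p) = r^4 * hs (X p)" for p
  proof -
    have "Z p = Had ** (adj (dg a b) ** X p ** dg a b) ** Had"
      unfolding Z_def U adj_mult adj_Had by (simp add: matrix_mul_assoc)
    then show ?thesis using hs_Had hs_dg[OF U(2,3)] by simp
  qed
  have nZ: "nrm2 Z = r^4 * nrm2 X" unfolding nrm2_def hsZ avr_cmult ..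
  have nXe: "avr (\<lambda>p. (cmod (A p $ k $ l))\<^sup>2) = (cmod (A0 $ k $ l))\<^sup>2 + avr (\<lambda>p. (cmod (X p $ k $ l))\<^sup>2)" for k l
  proof -
    have "(\<lambda>p. (cmod (A p $ k $ l))\<^sup>2) = (\<lambda>p. (cmod (A0 $ k $ l + X p $ k $ l))\<^sup>2)"
      unfolding Xe by simp
    then show ?thesis using avr_add_zero_mean[OF sqX avgX] by simp
  qed
  have nX: "nrm2 X = nrm2 A - hs A0"
    unfolding nrm2_split[OF A] nrm2_split[OF allX] nXe hs_def by (simp add: field_simps)
  have nXpos: "0 \<le> nrm2 X"
    unfolding nrm2_split[OF allX] using avr_nonneg[OF sqX] by (simp add: add_nonneg_nonneg)
  have We: "Wop \<nu> A p $ i $ j = es i j p * (B $ i $ j + Z p $ i $ j)" for p i j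
    unfolding Wop_def Smat_conj B_def Z_def X_def A0_def by simp
  have sqW: "sq (\<lambda>p. Wop \<nu> A p $ i $ j)" for i j
    unfolding We by (intro sq_unimod sq_add sq_const sqZ es_meas es_norm)
  show allW: "allsq (Wop \<nu> A)" unfolding allsq_def using sqW by auto
  have nWe: "avr (\<lambda>p. (cmod (Wop \<nu> A p $ i $ j))\<^sup>2) = (cmod (B $ i $ j))\<^sup>2 + avr (\<lambda>p. (cmod (Z p $ i $ j))\<^sup>2)" for i j
  proof -
    have "(\<lambda>p. (cmod (Wop \<nu> A p $ i $ j))\<^sup>2) = (\<lambda>p. (cmod (B $ i $ j + Z p $ i $ j))\<^sup>2)"
      unfolding We by (simp add: norm_mult es_norm)
    then show ?thesis using avr_add_zero_mean[OF sqZ avgZ] by simp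
  qed
  have nW: "nrm2 (Wop \<nu> A) = hs B + nrm2 Z"
    unfolding nrm2_split[OF allW] nrm2_split[OF allZ] nWe hs_def by (simp add: field_simps)
  show "nrm2 (Wop \<nu> A) = hs (Tch \<nu> (zero_mode A)) + r^4 * (nrm2 A - hs (zero_mode A))"
    using nW nZ nX unfolding B_def A0_def by simp
  show "0 \<le> nrm2 A - hs (zero_mode A)" using nX nXpos unfolding A0_def by simp
  have zd: "zero_mode (Wop \<nu> A) $ i $ i = B $ i $ i" for i
  proof -
    have "zero_mode (Wop \<nu> A) $ i $ i = avg (\<lambda>p. B $ i $ i + Z p $ i $ i)"
      unfolding zm_ent We es_diag by simp
    also have "\<dots> = B $ i $ i" by (simp add: avg_add sq_const sqZ avg_const avgZ)
    finally show ?thesis .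
  qed
  have zo: "(cmod (zero_mode (Wop \<nu> A) $ i $ j))\<^sup>2 \<le> avr (\<lambda>p. (cmod (Z p $ i $ j))\<^sup>2)"
    if "(i = 1 \<and> j = 2 \<or> i = 2 \<and> j = 1)" for i j
  proof -
    have "\<exists>k::real. (k = -2 \<or> k = 2) \<and> (\<forall>p. es i j p = cis (k * p))"
      using that
    proof (elim disjE conjE)
      assume "i = 1" "j = 2" then show ?thesis by (intro exI[of _ "-2"]) (simp add: es_vals)
    next
      assume "i = 2" "j = 1" then show ?thesis by (intro exI[of _ "2"]) (simp add: es_vals)
    qed
    then obtain k :: real where k: "k = -2 \<or> k = 2" "\<And>p. es i j p = cis (k * p)" by blast
    have "zero_mode (Wop \<nu> A) $ i $ j = avg (\<lambda>p. B $ i $ j * cis (k * p) + 1 * (cis (k * p) * Z p $ i $ j))"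
      unfolding zm_ent We k(2) by (simp add: algebra_simps)
    also have "\<dots> = B $ i $ j * avg (\<lambda>p. cis (k * p)) + 1 * avg (\<lambda>p. cis (k * p) * Z p $ i $ j)"
      by (rule avg_lin) (auto intro!: sq_cis sq_unimod sqZ borel_measurable_continuous_onI continuous_intros)
    also have "avg (\<lambda>p. cis (k * p)) = 0" using k(1) avg_cis2 by auto
    finally have "zero_mode (Wop \<nu> A) $ i $ j = avg (\<lambda>p. cis (k * p) * Z p $ i $ j)" by simp
    also have "(cmod \<dots>)\<^sup>2 \<le> avr (\<lambda>p. (cmod (cis (k * p) * Z p $ i $ j))\<^sup>2)"
      by (rule jensen) (auto intro!: sq_unimod sqZ borel_measurable_continuous_onI continuous_intros)
    also have "\<dots> = avr (\<lambda>p. (cmod (Z p $ i $ j))\<^sup>2)" by (simp add: norm_mult)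
    finally show ?thesis by simp
  qed
  have "hs (zero_mode (Wop \<nu> A)) \<le> ((cmod (B$1$1))\<^sup>2 + (cmod (B$2$2))\<^sup>2)/2 + nrm2 Z"
    unfolding hs_def nrm2_split[OF allZ] zd
    using zo[of 1 2] zo[of 2 1] avr_nonneg[OF sqZ, of 1 1] avr_nonneg[OF sqZ, of 2 2] by (simp add: field_simps)
  then show "hs (zero_mode (Wop \<nu> A)) \<le> ((cmod (Tch \<nu> (zero_mode A) $1$1))\<^sup>2 + (cmod (Tch \<nu> (zero_mode A) $2$2))\<^sup>2)/2
          + r^4 * (nrm2 A - hs (zero_mode A))"
    using nZ nX unfolding B_def A0_def by simp
qed

section \<open>Channel and coin averages\<close>

lemma wt_diag:
  assumes "prob_space \<mu>" shows "wt \<mu> k k = 1"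
proof -
  interpret prob_space \<mu> by fact
  have "\<And>\<phi>. cnj (ds \<phi> k) * ds \<phi> k = 1" by (simp add: cnj_mult_self)
  then show ?thesis unfolding wt_def by (simp add: prob_space)
qed

lemma wt_off: "cmod (wt \<mu> 1 2) = cmod (\<integral>\<phi>. cis (2 * \<phi>) \<partial>\<mu>)"
               "cmod (wt \<mu> 2 1) = cmod (\<integral>\<phi>. cis (2 * \<phi>) \<partial>\<mu>)"
proof -
  have "wt \<mu> 1 2 = (\<integral>\<phi>. cnj (cis (2 * \<phi>)) \<partial>\<mu>)"
    unfolding wt_def ds_def by (simp add: cis_cnj cis_mult)
  then show "cmod (wt \<mu> 1 2) = cmod (\<integral>\<phi>. cis (2 * \<phi>) \<partial>\<mu>)" by simp
  have "wt \<mu> 2 1 = (\<integral>\<phi>. cis (2 * \<phi>) \<partial>\<mu>)"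
    unfolding wt_def ds_def by (simp add: cis_cnj cis_mult)
  then show "cmod (wt \<mu> 2 1) = cmod (\<integral>\<phi>. cis (2 * \<phi>) \<partial>\<mu>)" by simp
qed

lemma T_hs:
  assumes "prob_space \<mu>" "sets \<mu> = sets borel"
  shows "hs (Tch (distr \<mu> borel Hphi) B) = ((cmod (B$1$1))\<^sup>2 + (cmod (B$2$2))\<^sup>2
     + (cmod (\<integral>\<phi>. cis (2 * \<phi>) \<partial>\<mu>))\<^sup>2 * ((cmod (B$1$2))\<^sup>2 + (cmod (B$2$1))\<^sup>2)) / 2"
  unfolding Tch_eq[OF assms] hs_Had unfolding hs_def
  by (simp add: norm_mult wt_diag[OF assms(1)] wt_off power_mult_distrib algebra_simps)

lemma T_diag:
  assumes "prob_space \<mu>" "sets \<mu> = sets borel" "B$1$1 + B$2$2 = 0"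
  shows "((cmod (Tch (distr \<mu> borel Hphi) B $1$1))\<^sup>2 + (cmod (Tch (distr \<mu> borel Hphi) B $2$2))\<^sup>2)/2
     \<le> (cmod (\<integral>\<phi>. cis (2 * \<phi>) \<partial>\<mu>))\<^sup>2 * ((cmod (B$1$2))\<^sup>2 + (cmod (B$2$1))\<^sup>2) / 2"
proof -
  define x where "x = B$1$2 * wt \<mu> 1 2"
  define y where "y = B$2$1 * wt \<mu> 2 1"
  have b22: "B$2$2 = - B$1$1" using assms(3) by (simp add: eq_neg_iff_add_eq_0 add.commute)
  have t11: "Tch (distr \<mu> borel Hphi) B $1$1 = (x + y) / 2"
    unfolding Tch_eq[OF assms(1,2)] HYH x_def y_def by (simp add: wt_diag[OF assms(1)] b22)
  have t22: "Tch (distr \<mu> borel Hphi) B $2$2 = - (x + y) / 2"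
    unfolding Tch_eq[OF assms(1,2)] HYH x_def y_def by (simp add: wt_diag[OF assms(1)] b22 algebra_simps)
  have "(cmod (x + y))\<^sup>2 \<le> 2 * (cmod x)\<^sup>2 + 2 * (cmod y)\<^sup>2"
    using norm_lin_sq[of 1 x 1 y] by simp
  moreover have "(cmod x)\<^sup>2 = (cmod (\<integral>\<phi>. cis (2 * \<phi>) \<partial>\<mu>))\<^sup>2 * (cmod (B$1$2))\<^sup>2"
    unfolding x_def by (simp add: norm_mult wt_off power_mult_distrib)
  moreover have "(cmod y)\<^sup>2 = (cmod (\<integral>\<phi>. cis (2 * \<phi>) \<partial>\<mu>))\<^sup>2 * (cmod (B$2$1))\<^sup>2"
    unfolding y_def by (simp add: norm_mult wt_off power_mult_distrib)
  moreover have "cmod (- x - y) = cmod (x + y)"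
    by (metis minus_add_distrib norm_minus_cancel diff_conv_add_uminus)
  ultimately show ?thesis unfolding t11 t22
    by (simp add: norm_divide power_divide field_simps)
qed

lemma Uavg_form:
  assumes "prob_space \<mu>" "sets \<mu> = sets borel"
  shows "Uavg (distr \<mu> borel Hphi) = dg (\<integral>\<phi>. cis \<phi> \<partial>\<mu>) (\<integral>\<phi>. cis (-\<phi>) \<partial>\<mu>) ** Had"
    "cmod (\<integral>\<phi>. cis (-\<phi>) \<partial>\<mu>) = cmod (\<integral>\<phi>. cis \<phi> \<partial>\<mu>)"
proof -
  show "Uavg (distr \<mu> borel Hphi) = dg (\<integral>\<phi>. cis \<phi> \<partial>\<mu>) (\<integral>\<phi>. cis (-\<phi>) \<partial>\<mu>) ** Had"
    by (rule Uavg_eq[OF assms])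
  have "(\<integral>\<phi>. cis (-\<phi>) \<partial>\<mu>) = (\<integral>\<phi>. cnj (cis \<phi>) \<partial>\<mu>)" by (simp add: cis_cnj)
  then show "cmod (\<integral>\<phi>. cis (-\<phi>) \<partial>\<mu>) = cmod (\<integral>\<phi>. cis \<phi> \<partial>\<mu>)" by simp
qed

lemma Tone_trace:
  assumes "allsq A" "Tinner Tone A = 0"
  shows "zero_mode A $1$1 + zero_mode A $2$2 = 0"
proof -
  have tr: "(1/2) * mtrace (adj (Tone p) ** A p) = (1/2) * (A p $1$1 + A p $2$2)" for p
    unfolding mtrace_def Tone_def by (simp add: sum_2 matrix_matrix_mult_def adj_ent idm_def)
  have s1: "sq (\<lambda>p. A p $1$1)" "sq (\<lambda>p. A p $2$2)" using assms(1) unfolding allsq_def by auto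
  have "Tinner Tone A = (1/2) * (avg (\<lambda>p. A p $1$1 + A p $2$2))"
    unfolding Tinner_def tr avg_def by simp
  also have "\<dots> = (1/2) * (zero_mode A $1$1 + zero_mode A $2$2)"
    by (simp add: avg_add s1 zm_ent)
  finally show ?thesis using assms(2) by simp
qed

theorem lemma2:
  fixes \<mu> :: "real measure"
  assumes "prob_space \<mu>"
    and "sets \<mu> = sets borel"
    and "measure \<mu> {-pi..<pi} = 1"
    and "cmod (\<integral>\<phi>. cis (1 * \<phi>) \<partial>\<mu>) < 1"
    and "cmod (\<integral>\<phi>. cis (2 * \<phi>) \<partial>\<mu>) < 1"
  shows "strictly_contractive_perp (Wop (distr \<mu> borel Hphi) \<circ> Wop (distr \<mu> borel Hphi))"
proof -
  define \<nu> where "\<nu> = distr \<mu> borel Hphi"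
  define m1 where "m1 = (\<integral>\<phi>. cis \<phi> \<partial>\<mu>)"
  define n1 where "n1 = (\<integral>\<phi>. cis (-\<phi>) \<partial>\<mu>)"
  define r where "r = cmod m1"
  define r2 where "r2 = cmod (\<integral>\<phi>. cis (2 * \<phi>) \<partial>\<mu>)"
  define R where "R = r^4"
  define q where "q = r2\<^sup>2"
  define cc where "cc = max R q"
  have r1: "r < 1" using assms(4) by (simp add: r_def m1_def)
  have r0: "0 \<le> r" by (simp add: r_def)
  have r21: "r2 < 1" using assms(5) by (simp add: r2_def)
  have r20: "0 \<le> r2" by (simp add: r2_def)
  have R1: "R < 1" unfolding R_def using power_strict_mono[OF r1 r0, of 4] by simp
  have R0: "0 \<le> R" unfolding R_def using r0 by simp
  have q1: "q < 1" unfolding q_def using power_strict_mono[OF r21 r20, of 2] by simp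
  have q0: "0 \<le> q" unfolding q_def by simp
  have cc1: "cc < 1" unfolding cc_def using R1 q1 by simp
  have U: "Uavg \<nu> = dg m1 n1 ** Had" "cmod m1 = r" "cmod n1 = r"
    using Uavg_form[OF assms(1,2)] unfolding \<nu>_def m1_def n1_def r_def by auto
  show ?thesis
    unfolding strictly_contractive_perp_def \<nu>_def[symmetric]
  proof (intro exI[of _ "sqrt cc"] conjI allI impI)
    show "sqrt cc < 1" using cc1 by simp
    fix A assume inA: "inT A" and perp: "Tinner Tone A = 0"
    have allA: "allsq A" using inA by (simp add: inT_allsq)
    define A0 where "A0 = zero_mode A"
    define Q where "Q = Wop \<nu> A"
    define Q0 where "Q0 = zero_mode Q"
    define y where "y = nrm2 A - hs A0"
    define a where "a = ((cmod (A0$1$1))\<^sup>2 + (cmod (A0$2$2))\<^sup>2) / 2"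
    define s where "s = ((cmod (A0$1$2))\<^sup>2 + (cmod (A0$2$1))\<^sup>2) / 2"
    note S1 = walk_step[OF U allA]
    have allQ: "allsq Q" unfolding Q_def by (rule S1(1))
    have nQ: "nrm2 Q = hs (Tch \<nu> A0) + R * y"
      unfolding Q_def A0_def y_def R_def by (rule S1(2))
    have hQ0: "hs Q0 \<le> ((cmod (Tch \<nu> A0 $1$1))\<^sup>2 + (cmod (Tch \<nu> A0 $2$2))\<^sup>2)/2 + R * y"
      unfolding Q0_def Q_def A0_def y_def R_def by (rule S1(3))
    have y0: "0 \<le> y" unfolding y_def A0_def by (rule S1(4))
    note S2 = walk_step[OF U allQ]
    have nWQ: "nrm2 (Wop \<nu> Q) = hs (Tch \<nu> Q0) + R * (nrm2 Q - hs Q0)"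
      unfolding Q0_def R_def by (rule S2(2))
    have TQ0: "hs (Tch \<nu> Q0) \<le> hs Q0"
    proof -
      have "q * ((cmod (Q0$1$2))\<^sup>2 + (cmod (Q0$2$1))\<^sup>2) \<le> (cmod (Q0$1$2))\<^sup>2 + (cmod (Q0$2$1))\<^sup>2"
        using q1 q0 by (intro mult_left_le_one_le) auto
      moreover have "hs (Tch \<nu> Q0) = ((cmod (Q0$1$1))\<^sup>2 + (cmod (Q0$2$2))\<^sup>2
         + q * ((cmod (Q0$1$2))\<^sup>2 + (cmod (Q0$2$1))\<^sup>2)) / 2"
        unfolding \<nu>_def q_def r2_def by (rule T_hs[OF assms(1,2)])
      ultimately show ?thesis unfolding hs_def by simp
    qed
    have TA0: "hs (Tch \<nu> A0) = a + q * s"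
      unfolding \<nu>_def T_hs[OF assms(1,2)] a_def s_def r2_def[symmetric] q_def[symmetric]
      by (simp add: field_simps)
    have tr: "A0$1$1 + A0$2$2 = 0" unfolding A0_def by (rule Tone_trace[OF allA perp])
    have dA0: "((cmod (Tch \<nu> A0 $1$1))\<^sup>2 + (cmod (Tch \<nu> A0 $2$2))\<^sup>2)/2 \<le> q * s"
      using T_diag[OF assms(1,2) tr] unfolding \<nu>_def s_def r2_def[symmetric] q_def[symmetric]
      by (simp add: field_simps)
    have hA0: "hs A0 = a + s" unfolding hs_def a_def s_def by (simp add: field_simps)
    have a0: "0 \<le> a" "0 \<le> s" unfolding a_def s_def by auto
    have nA: "nrm2 A = a + s + y" using hA0 unfolding y_def by simp
    have "nrm2 (Wop \<nu> Q) \<le> hs Q0 + R * (nrm2 Q - hs Q0)" using nWQ TQ0 by simp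
    also have "\<dots> = (1 - R) * hs Q0 + R * nrm2 Q" by (simp add: algebra_simps)
    also have "\<dots> \<le> (1 - R) * (q * s + R * y) + R * nrm2 Q"
    proof -
      have "hs Q0 \<le> q * s + R * y" using hQ0 dA0 by linarith
      then show ?thesis using R1 by (intro add_right_mono mult_left_mono) auto
    qed
    also have "\<dots> = R * a + q * s + R * y" unfolding nQ TA0 by (simp add: algebra_simps)
    also have "\<dots> \<le> cc * a + cc * s + cc * y"
      using a0 y0 unfolding cc_def
      by (intro add_mono mult_right_mono) auto
    also have "\<dots> = cc * nrm2 A" unfolding nA by (simp add: algebra_simps)
    finally have main: "nrm2 (Wop \<nu> (Wop \<nu> A)) \<le> cc * nrm2 A" unfolding Q_def .
    have "Tnorm ((Wop \<nu> \<circ> Wop \<nu>) A) = sqrt (nrm2 (Wop \<nu> (Wop \<nu> A)))"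
      by (simp add: Tnorm_nrm2)
    also have "\<dots> \<le> sqrt (cc * nrm2 A)" using main by simp
    also have "\<dots> = sqrt cc * Tnorm A" by (simp add: Tnorm_nrm2 real_sqrt_mult)
    finally show "Tnorm ((Wop \<nu> \<circ> Wop \<nu>) A) \<le> sqrt cc * Tnorm A" .
  qed
qed


end
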